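(* Let $(X,d,f)$ be a dynamical system and $\mathcal{A}=\{\mathcal{U}_n\}_{n\in\mathbb{N}}$ a tame defining sequence of $(X,d)$. (i) If $f$ has the shadowing property, then $f$ has the finite shadowing property and the inverse system $(\hookrightarrow,\mathcal{PO}(\mathcal{U}_n))$ satisfies the Mittag-Leffler Condition. (ii) Suppose in addition that $\mathcal{A}$ is complete and $f$ is uniformly continuous. If $f$ has the finite shadowing property and $(\hookrightarrow,\mathcal{PO}(\mathcal{U}_n))$ satisfies the Mittag-Leffler Condition, then $f$ has the shadowing property.
   Context: Spaces are nonempty separable metrizable; a dynamical system $(X,d,f)$ has admissible metric $d$ and continuous $f:X\to X$. A partition is a cover by pairwise disjoint nonempty clopen sets. A defining sequence is a sequence of partitions $\{\mathcal{U}_n\}$, each refining the previous, whose union is a basis; complete if nested sequences $U_n\in\mathcal{U}_n$ have nonempty intersection; tame if $\sup\{\operatorname{diam}O:O\in\mathcal{U}_n\}\to0$ and each $\mathcal{U}_n$ is $\rho_n$-separated for some $\rho_n>0$ (points of distinct elements are at distance $\ge\rho_n$). Shadowing notions: a $\delta$-pseudo-orbit is a finite or infinite sequence $(x_n)$ with $d(f(x_n),x_{n+1})<\delta$; it is $\varepsilon$-shadowed by $x$ if $d(f^n(x),x_n)<\varepsilon$ for all indices. Finite shadowing property: $\forall\varepsilon\,\exists\delta$ every finite $\delta$-pseudo-orbit is $\varepsilon$-shadowed; shadowing property: same for infinite ones. $\mathcal{PO}(\mathcal{U})=\{(O_i)_{i\in\mathbb{N}}\in\mathcal{U}^{\mathbb{N}}: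 f(O_i)\cap O_{i+1}\ne\emptyset\ \forall i\}$. The map $\hookrightarrow:\mathcal{PO}(\mathcal{U}_{n+1})\to\mathcal{PO}(\mathcal{U}_n)$ sends $(O_i)$ to the unique $(V_i)\in\mathcal{U}_n^{\mathbb{N}}$ with $O_i\subseteq V_i$. An inverse system $(g_m,X_m)$, $g_m:X_{m+1}\to X_m$, satisfies the Mittag-Leffler Condition if for every $N$ there is $k>N$ such that $g_N\circ\cdots\circ g_k(X_{k+1})=g_N\circ\cdots\circ g_i(X_{i+1})$ for all $i\ge k$. *)

theory Defs
  imports "HOL-Analysis.Analysis"
begin

text \<open>The space X is the whole type 'a of class metric_space (so d = dist and the
topology is the metric topology).\<close>

definition separable_space :: "'a::metric_space itself \<Rightarrow> bool" where
  "separable_space _ \<longleftrightarrow> (\<exists>D::'a set. countable D \<and> closure D = UNIV)"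

definition is_partition :: "'a::topological_space set set \<Rightarrow> bool" where
  "is_partition \<U> \<longleftrightarrow>
     (\<Union>\<U> = UNIV) \<and>
     (\<forall>W\<in>\<U>. W \<noteq> {} \<and> open W \<and> closed W) \<and>
     (\<forall>W\<in>\<U>. \<forall>W'\<in>\<U>. W \<noteq> W' \<longrightarrow> W \<inter> W' = {})"

definition refines :: "'a set set \<Rightarrow> 'a set set \<Rightarrow> bool" where
  "refines \<V> \<U> \<longleftrightarrow> (\<forall>V\<in>\<V>. \<exists>U\<in>\<U>. V \<subseteq> U)"

definition defining_sequence :: "(nat \<Rightarrow> 'a::topological_space set set) \<Rightarrow> bool" where
  "defining_sequence \<U> \<longleftrightarrow>
     (\<forall>n. is_partition (\<U> n)) \<and>
     (\<forall>n. refines (\<U> (Suc n)) (\<U> n)) \<and>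
     topological_basis (\<Union>n. \<U> n)"

definition complete_defseq :: "(nat \<Rightarrow> 'a::topological_space set set) \<Rightarrow> bool" where
  "complete_defseq \<U> \<longleftrightarrow>
     (\<forall>V. (\<forall>n. V n \<in> \<U> n) \<and> (\<forall>n. V (Suc n) \<subseteq> V n) \<longrightarrow> (\<Inter>n. V n) \<noteq> {})"

text \<open>sup of diameters tends to 0, written out with explicit distances
(the library's diameter is 0 on unbounded sets, so we avoid it).\<close>
definition tame_defseq :: "(nat \<Rightarrow> 'a::metric_space set set) \<Rightarrow> bool" where
  "tame_defseq \<U> \<longleftrightarrow>
     (\<forall>\<epsilon>>0. \<exists>N. \<forall>n\<ge>N. \<forall>W\<in>\<U> n. \<forall>x\<in>W. \<forall>y\<in>W. dist x y \<le> \<epsilon>) \<and>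
     (\<forall>n. \<exists>\<rho>>0. \<forall>W\<in>\<U> n. \<forall>W'\<in>\<U> n. W \<noteq> W' \<longrightarrow>
          (\<forall>x\<in>W. \<forall>y\<in>W'. dist x y \<ge> \<rho>))"

definition finite_shadowing :: "('a::metric_space \<Rightarrow> 'a) \<Rightarrow> bool" where
  "finite_shadowing f \<longleftrightarrow>
     (\<forall>\<epsilon>>0. \<exists>\<delta>>0. \<forall>(xs::nat \<Rightarrow> 'a) (N::nat).
        (\<forall>i<N. dist (f (xs i)) (xs (Suc i)) < \<delta>) \<longrightarrow>
        (\<exists>x. \<forall>i\<le>N. dist ((f ^^ i) x) (xs i) < \<epsilon>))"

definition shadowing :: "('a::metric_space \<Rightarrow> 'a) \<Rightarrow> bool" where
  "shadowing f \<longleftrightarrow>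
     (\<forall>\<epsilon>>0. \<exists>\<delta>>0. \<forall>xs::nat \<Rightarrow> 'a.
        (\<forall>i. dist (f (xs i)) (xs (Suc i)) < \<delta>) \<longrightarrow>
        (\<exists>x. \<forall>i. dist ((f ^^ i) x) (xs i) < \<epsilon>))"

definition PO :: "('a \<Rightarrow> 'a) \<Rightarrow> 'a set set \<Rightarrow> (nat \<Rightarrow> 'a set) set" where
  "PO f \<U> = {W. (\<forall>i. W i \<in> \<U>) \<and> (\<forall>i. f ` (W i) \<inter> W (Suc i) \<noteq> {})}"

definition parent :: "'a set set \<Rightarrow> 'a set \<Rightarrow> 'a set" where
  "parent \<U> W = (THE V. V \<in> \<U> \<and> W \<subseteq> V)"

definition hook :: "(nat \<Rightarrow> 'a set set) \<Rightarrow> nat \<Rightarrow> (nat \<Rightarrow> 'a set) \<Rightarrow> (nat \<Rightarrow> 'a set)" where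
  "hook \<U> n W = (\<lambda>i. parent (\<U> n) (W i))"

fun bond_comp :: "(nat \<Rightarrow> 'b \<Rightarrow> 'b) \<Rightarrow> nat \<Rightarrow> nat \<Rightarrow> 'b \<Rightarrow> 'b" where
  "bond_comp g N 0 = g N"
| "bond_comp g N (Suc m) = bond_comp g N m \<circ> g (N + Suc m)"

text \<open>Inverse system (g_m, X_m), g_m : X_(m+1) -> X_m\<close>
definition mittag_leffler :: "(nat \<Rightarrow> 'b \<Rightarrow> 'b) \<Rightarrow> (nat \<Rightarrow> 'b set) \<Rightarrow> bool" where
  "mittag_leffler g X \<longleftrightarrow>
     (\<forall>N. \<exists>k>N. \<forall>i\<ge>k.
        bond_comp g N (k - N) ` X (Suc k) = bond_comp g N (i - N) ` X (Suc i))"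

end

theory Submission
  imports Defs
begin

definition elt :: "(nat \<Rightarrow> 'a set set) \<Rightarrow> nat \<Rightarrow> 'a \<Rightarrow> 'a set" where
  "elt U n x = (SOME V. V \<in> U n \<and> x \<in> V)"

definition Img :: "('a \<Rightarrow> 'a) \<Rightarrow> (nat \<Rightarrow> 'a set set) \<Rightarrow> nat \<Rightarrow> nat \<Rightarrow> (nat \<Rightarrow> 'a set) set" where
  "Img f U m i = (\<lambda>W j. parent (U m) (W j)) ` PO f (U (Suc i))"

lemma ds_part: "defining_sequence U \<Longrightarrow> is_partition (U n)"
  unfolding defining_sequence_def by simp

lemma ds_ne: "defining_sequence U \<Longrightarrow> W \<in> U n \<Longrightarrow> W \<noteq> {}"
  using ds_part[of U n] unfolding is_partition_def by simp

lemma ds_uniq: "defining_sequence U \<Longrightarrow> W \<in> U n \<Longrightarrow> W' \<in> U n \<Longrightarrow> x \<in> W \<Longrightarrow> x \<in> W' \<Longrightarrow> W = W'"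
proof (rule ccontr)
  assume "defining_sequence U" "W \<in> U n" "W' \<in> U n" "x \<in> W" "x \<in> W'" "W \<noteq> W'"
  moreover have "\<forall>W\<in>U n. \<forall>W'\<in>U n. W \<noteq> W' \<longrightarrow> W \<inter> W' = {}"
    using ds_part[OF \<open>defining_sequence U\<close>, of n] unfolding is_partition_def by simp
  ultimately show False by auto
qed

lemma ds_cover: "defining_sequence U \<Longrightarrow> \<exists>W\<in>U n. x \<in> W"
proof -
  assume "defining_sequence U"
  then have "\<Union>(U n) = UNIV" using ds_part[of U n] unfolding is_partition_def by simp
  then have "x \<in> \<Union>(U n)" by simp
  then show ?thesis by (simp only: Union_iff)
qed

lemma elt_in: "defining_sequence U \<Longrightarrow> elt U n x \<in> U n \<and> x \<in> elt U n x"
proof -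
  assume "defining_sequence U"
  then have "\<exists>V. V \<in> U n \<and> x \<in> V" using ds_cover by blast
  then show ?thesis unfolding elt_def by (rule someI_ex)
qed

lemma ds_ref: "defining_sequence U \<Longrightarrow> A \<in> U (Suc n) \<Longrightarrow> \<exists>B\<in>U n. A \<subseteq> B"
proof -
  assume ds: "defining_sequence U" and A: "A \<in> U (Suc n)"
  have "refines (U (Suc n)) (U n)" using ds unfolding defining_sequence_def by (elim conjE) (rule spec)
  then show ?thesis using A unfolding refines_def by (rule bspec)
qed

lemma ds_up: "defining_sequence U \<Longrightarrow> m \<le> n \<Longrightarrow> A \<in> U n \<Longrightarrow> \<exists>B\<in>U m. A \<subseteq> B"
proof (induction n arbitrary: A)
  case 0
  then have "m = 0" by simp
  then show ?case using 0(3) by blast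
next
  case (Suc n)
  show ?case
  proof (cases "m = Suc n")
    case True
    then show ?thesis using Suc.prems(3) by blast
  next
    case False
    then have "m \<le> n" using Suc.prems(2) by simp
    obtain A' where "A' \<in> U n" "A \<subseteq> A'"
      using ds_ref[OF Suc.prems(1) Suc.prems(3)] by blast
    moreover obtain B where "B \<in> U m" "A' \<subseteq> B" using Suc.IH[OF Suc.prems(1) \<open>m \<le> n\<close> \<open>A' \<in> U n\<close>] by blast
    ultimately show ?thesis by blast
  qed
qed

lemma parent_eq: "defining_sequence U \<Longrightarrow> A \<in> U n \<Longrightarrow> B \<in> U m \<Longrightarrow> A \<subseteq> B \<Longrightarrow> parent (U m) A = B"
  unfolding parent_def
proof (rule the_equality)
  assume "defining_sequence U" "A \<in> U n" "B \<in> U m" "A \<subseteq> B"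
  then show "B \<in> U m \<and> A \<subseteq> B" by auto
  fix V assume "V \<in> U m \<and> A \<subseteq> V"
  moreover obtain x where "x \<in> A" using ds_ne[OF \<open>defining_sequence U\<close> \<open>A \<in> U n\<close>] by blast
  ultimately show "V = B" using ds_uniq[OF \<open>defining_sequence U\<close> \<open>B \<in> U m\<close>, of V x] \<open>A \<subseteq> B\<close> by blast
qed

lemma parent_in: "defining_sequence U \<Longrightarrow> m \<le> n \<Longrightarrow> A \<in> U n \<Longrightarrow> parent (U m) A \<in> U m \<and> A \<subseteq> parent (U m) A"
proof -
  assume ds: "defining_sequence U" and mn: "m \<le> n" and A: "A \<in> U n"
  obtain B where B: "B \<in> U m" "A \<subseteq> B" using ds_up[OF ds mn A] by blast
  show ?thesis using parent_eq[OF ds A B] B by simp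
qed

lemma parent_trans: "defining_sequence U \<Longrightarrow> m \<le> l \<Longrightarrow> l \<le> n \<Longrightarrow> A \<in> U n
   \<Longrightarrow> parent (U m) (parent (U l) A) = parent (U m) A"
proof -
  assume ds: "defining_sequence U" and ml: "m \<le> l" and ln: "l \<le> n" and A: "A \<in> U n"
  have P: "parent (U l) A \<in> U l" "A \<subseteq> parent (U l) A" using parent_in[OF ds ln A] by auto
  have B: "parent (U m) (parent (U l) A) \<in> U m" "parent (U l) A \<subseteq> parent (U m) (parent (U l) A)"
    using parent_in[OF ds ml P(1)] by auto
  show ?thesis using parent_eq[OF ds A B(1)] P(2) B(2) by auto
qed

lemma parent_pt: "defining_sequence U \<Longrightarrow> m \<le> n \<Longrightarrow> A \<in> U n \<Longrightarrow> x \<in> A \<Longrightarrow> B \<in> U m \<Longrightarrow> x \<in> B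
   \<Longrightarrow> parent (U m) A = B"
proof -
  assume ds: "defining_sequence U" and mn: "m \<le> n" and A: "A \<in> U n" and x: "x \<in> A" and B: "B \<in> U m" "x \<in> B"
  have "parent (U m) A \<in> U m" "x \<in> parent (U m) A" using parent_in[OF ds mn A] x by auto
  then show ?thesis using ds_uniq[OF ds _ B(1) _ B(2)] by blast
qed

lemma bond: "defining_sequence U \<Longrightarrow> \<forall>j. W j \<in> U (m + l + 1)
   \<Longrightarrow> bond_comp (hook U) m l W = (\<lambda>j. parent (U m) (W j))"
proof (induction l arbitrary: W)
  case 0
  then show ?case by (simp add: hook_def)
next
  case (Suc l)
  have h: "hook U (m + Suc l) W = (\<lambda>j. parent (U (m + Suc l)) (W j))" by (simp add: hook_def)
  have "\<forall>j. parent (U (m + Suc l)) (W j) \<in> U (m + l + 1)"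
    using parent_in[OF Suc.prems(1), of "m + Suc l" "m + Suc l + 1"] Suc.prems(2) by auto
  then have "bond_comp (hook U) m (Suc l) W = (\<lambda>j. parent (U m) (parent (U (m + Suc l)) (W j)))"
    using Suc.IH[OF Suc.prems(1)] h by simp
  also have "\<dots> = (\<lambda>j. parent (U m) (W j))"
    using parent_trans[OF Suc.prems(1), of m "m + Suc l" "m + Suc l + 1"] Suc.prems(2) by auto
  finally show ?case .
qed

lemma bond_img: "defining_sequence U \<Longrightarrow> N \<le> i
   \<Longrightarrow> bond_comp (hook U) N (i - N) ` PO f (U (Suc i)) = Img f U N i"
  unfolding Img_def
proof (rule image_cong[OF refl])
  fix W assume ds: "defining_sequence U" and Ni: "N \<le> i" and W: "W \<in> PO f (U (Suc i))"
  have "\<forall>j. W j \<in> U (N + (i - N) + 1)" using W Ni unfolding PO_def by auto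
  then show "bond_comp (hook U) N (i - N) W = (\<lambda>j. parent (U N) (W j))" using bond[OF ds] by blast
qed

lemma ml_iff: "defining_sequence U \<Longrightarrow>
  mittag_leffler (hook U) (\<lambda>n. PO f (U n)) \<longleftrightarrow> (\<forall>N. \<exists>k>N. \<forall>i\<ge>k. Img f U N k = Img f U N i)"
proof -
  assume ds: "defining_sequence U"
  have e: "(bond_comp (hook U) N (k - N) ` PO f (U (Suc k)) = bond_comp (hook U) N (i - N) ` PO f (U (Suc i)))
     \<longleftrightarrow> Img f U N k = Img f U N i" if a: "N < k" "k \<le> i" for N k i :: nat
  proof -
    have "N \<le> k" "N \<le> i" using a by simp_all
    then show ?thesis using bond_img[OF ds, of N k f] bond_img[OF ds, of N i f] by simp
  qed
  show ?thesis unfolding mittag_leffler_def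
  proof (intro iffI allI)
    fix N assume "\<forall>N. \<exists>k>N. \<forall>i\<ge>k. bond_comp (hook U) N (k - N) ` PO f (U (Suc k)) =
              bond_comp (hook U) N (i - N) ` PO f (U (Suc i))"
    then obtain k where k: "k > N" and H: "\<forall>i\<ge>k. bond_comp (hook U) N (k - N) ` PO f (U (Suc k)) =
              bond_comp (hook U) N (i - N) ` PO f (U (Suc i))" by blast
    show "\<exists>k>N. \<forall>i\<ge>k. Img f U N k = Img f U N i"
    proof (intro exI[of _ k] conjI allI impI k)
      fix i assume "k \<le> i"
      then show "Img f U N k = Img f U N i" using e[OF k \<open>k \<le> i\<close>] H by simp
    qed
  next
    fix N assume "\<forall>N. \<exists>k>N. \<forall>i\<ge>k. Img f U N k = Img f U N i"
    then obtain k where k: "k > N" and H: "\<forall>i\<ge>k. Img f U N k = Img f U N i" by blast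
    show "\<exists>k>N. \<forall>i\<ge>k. bond_comp (hook U) N (k - N) ` PO f (U (Suc k)) =
              bond_comp (hook U) N (i - N) ` PO f (U (Suc i))"
    proof (intro exI[of _ k] conjI allI impI k)
      fix i assume "k \<le> i"
      then show "bond_comp (hook U) N (k - N) ` PO f (U (Suc k)) =
              bond_comp (hook U) N (i - N) ` PO f (U (Suc i))" using e[OF k \<open>k \<le> i\<close>] H by simp
    qed
  qed
qed

lemma sep_same: "\<forall>W\<in>U n. \<forall>W'\<in>U n. W \<noteq> W' \<longrightarrow> (\<forall>x\<in>W. \<forall>y\<in>W'. \<rho> \<le> dist x y)
   \<Longrightarrow> V \<in> U n \<Longrightarrow> V' \<in> U n \<Longrightarrow> x \<in> V \<Longrightarrow> y \<in> V' \<Longrightarrow> dist x y < \<rho> \<Longrightarrow> V = V'"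
proof (rule ccontr)
  assume H: "\<forall>W\<in>U n. \<forall>W'\<in>U n. W \<noteq> W' \<longrightarrow> (\<forall>x\<in>W. \<forall>y\<in>W'. \<rho> \<le> dist x y)"
    and a: "V \<in> U n" "V' \<in> U n" "x \<in> V" "y \<in> V'" "dist x y < \<rho>" "V \<noteq> V'"
  then have "\<rho> \<le> dist x y" by blast
  then show False using a(5) by simp
qed

lemma part_fin: "shadowing f \<Longrightarrow> finite_shadowing f"
  unfolding finite_shadowing_def
proof (intro allI impI)
  fix \<epsilon> :: real assume sh: "shadowing f" and e: "\<epsilon> > 0"
  then obtain \<delta> where d: "\<delta> > 0" and sd: "\<forall>xs. (\<forall>i. dist (f (xs i)) (xs (Suc i)) < \<delta>) \<longrightarrow>
        (\<exists>x. \<forall>i. dist ((f ^^ i) x) (xs i) < \<epsilon>)" unfolding shadowing_def by blast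
  show "\<exists>\<delta>>0. \<forall>xs N. (\<forall>i<N. dist (f (xs i)) (xs (Suc i)) < \<delta>) \<longrightarrow>
        (\<exists>x. \<forall>i\<le>N. dist ((f ^^ i) x) (xs i) < \<epsilon>)"
  proof (intro exI[of _ \<delta>] conjI allI impI d)
    fix xs N assume p: "\<forall>i<N. dist (f (xs i)) (xs (Suc i)) < \<delta>"
    define ys where "ys = (\<lambda>i. if i \<le> N then xs i else (f ^^ (i - N)) (xs N))"
    have "\<forall>i. dist (f (ys i)) (ys (Suc i)) < \<delta>"
    proof
      fix i
      show "dist (f (ys i)) (ys (Suc i)) < \<delta>"
      proof (cases "i < N")
        case True
        then show ?thesis using p by (simp add: ys_def)
      next
        case False
        then have "Suc i - N = Suc (i - N)" by auto
        then have "ys (Suc i) = f (ys i)" using False by (auto simp: ys_def)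
        then show ?thesis using d by simp
      qed
    qed
    then obtain x where "\<forall>i. dist ((f ^^ i) x) (ys i) < \<epsilon>" using sd by blast
    then show "\<exists>x. \<forall>i\<le>N. dist ((f ^^ i) x) (xs i) < \<epsilon>" by (metis ys_def)
  qed
qed

lemma tame_sep: "tame_defseq U \<Longrightarrow> \<exists>\<rho>>0. \<forall>W\<in>U n. \<forall>W'\<in>U n. W \<noteq> W' \<longrightarrow> (\<forall>x\<in>W. \<forall>y\<in>W'. \<rho> \<le> dist x y)"
  unfolding tame_defseq_def by (elim conjE) (rule spec)

lemma tame_diam: "tame_defseq U \<Longrightarrow> (\<epsilon>::real) > 0 \<Longrightarrow> \<exists>N. \<forall>n\<ge>N. \<forall>W\<in>U n. \<forall>x\<in>W. \<forall>y\<in>W. dist x y \<le> \<epsilon>"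
  unfolding tame_defseq_def by (elim conjE) (erule allE, erule mp)

lemma diam_use: "\<forall>n\<ge>N. \<forall>W\<in>U n. \<forall>x\<in>W. \<forall>y\<in>W. dist x y \<le> (\<epsilon>::real) \<Longrightarrow> N \<le> n \<Longrightarrow> W \<in> U n
  \<Longrightarrow> x \<in> W \<Longrightarrow> y \<in> W \<Longrightarrow> dist x y \<le> \<epsilon>"
  by simp

lemma part_ml:
  assumes ds: "defining_sequence U" and tame: "tame_defseq U" and sh: "shadowing f"
  shows "\<forall>N. \<exists>k>N. \<forall>i\<ge>k. Img f U N k = Img f U N i"
proof
  fix N
  obtain \<rho> where rho: "\<rho> > 0" and sepN: "\<forall>W\<in>U N. \<forall>W'\<in>U N. W \<noteq> W' \<longrightarrow> (\<forall>x\<in>W. \<forall>y\<in>W'. \<rho> \<le> dist x y)"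
    using tame_sep[OF tame, of N] by blast
  obtain \<delta> where d: "\<delta> > 0" and sd: "\<forall>xs. (\<forall>i. dist (f (xs i)) (xs (Suc i)) < \<delta>) \<longrightarrow>
        (\<exists>x. \<forall>i. dist ((f ^^ i) x) (xs i) < \<rho>)" using sh rho unfolding shadowing_def by blast
  have "\<delta>/2 > 0" using d by simp
  then obtain K where diam: "\<forall>n\<ge>K. \<forall>W\<in>U n. \<forall>x\<in>W. \<forall>y\<in>W. dist x y \<le> \<delta>/2"
    using tame_diam[OF tame] by blast
  define k where "k = max (Suc N) K"
  show "\<exists>k>N. \<forall>i\<ge>k. Img f U N k = Img f U N i"
  proof (intro exI[of _ k] conjI allI impI)
    show "N < k" unfolding k_def by simp
    fix i assume ki: "k \<le> i"
    show "Img f U N k = Img f U N i"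
    proof
      show "Img f U N i \<subseteq> Img f U N k"
      proof
        fix c assume "c \<in> Img f U N i"
        then obtain W where W: "W \<in> PO f (U (Suc i))" and c: "c = (\<lambda>j. parent (U N) (W j))"
          unfolding Img_def by blast
        have Wj: "\<And>j. W j \<in> U (Suc i)" "\<And>j. f ` W j \<inter> W (Suc j) \<noteq> {}" using W unfolding PO_def by auto
        define Q where "Q = (\<lambda>j. parent (U (Suc k)) (W j))"
        have Qin: "\<And>j. Q j \<in> U (Suc k) \<and> W j \<subseteq> Q j"
          unfolding Q_def using parent_in[OF ds, of "Suc k" "Suc i"] ki Wj(1) by simp
        have "Q \<in> PO f (U (Suc k))" unfolding PO_def
        proof (intro CollectI conjI allI)
          fix j show "Q j \<in> U (Suc k)" using Qin by simp
          have "f ` W j \<inter> W (Suc j) \<subseteq> f ` Q j \<inter> Q (Suc j)" using Qin[of j] Qin[of "Suc j"] by blast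
          then show "f ` Q j \<inter> Q (Suc j) \<noteq> {}" using Wj(2)[of j] by blast
        qed
        moreover have "c = (\<lambda>j. parent (U N) (Q j))"
          unfolding c Q_def using parent_trans[OF ds, of N "Suc k" "Suc i"] ki Wj(1) unfolding k_def by simp
        ultimately show "c \<in> Img f U N k" unfolding Img_def by blast
      qed
    next
      show "Img f U N k \<subseteq> Img f U N i"
      proof
        fix c assume "c \<in> Img f U N k"
        then obtain W where W: "W \<in> PO f (U (Suc k))" and c: "c = (\<lambda>j. parent (U N) (W j))"
          unfolding Img_def by blast
        have Wj: "\<And>j. W j \<in> U (Suc k)" "\<And>j. f ` W j \<inter> W (Suc j) \<noteq> {}" using W unfolding PO_def by auto
        have "\<forall>j. \<exists>y. y \<in> W j \<and> f y \<in> W (Suc j)" using Wj(2) by blast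
        then obtain y where y: "\<And>j. y j \<in> W j \<and> f (y j) \<in> W (Suc j)" by (rule choice[THEN exE]) blast
        have "\<forall>j. dist (f (y j)) (y (Suc j)) < \<delta>"
        proof
          fix j
          have "Suc k \<ge> K" unfolding k_def by simp
          then have "dist (f (y j)) (y (Suc j)) \<le> \<delta>/2"
            using diam_use[OF diam _ Wj(1)[of "Suc j"]] y[of j] y[of "Suc j"] by blast
          then show "dist (f (y j)) (y (Suc j)) < \<delta>" using d by simp
        qed
        then obtain x where x: "\<forall>j. dist ((f ^^ j) x) (y j) < \<rho>" using sd by blast
        define E where "E = (\<lambda>j. elt U (Suc i) ((f ^^ j) x))"
        have E: "\<And>j. E j \<in> U (Suc i) \<and> (f ^^ j) x \<in> E j" unfolding E_def by (rule elt_in[OF ds])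
        have "E \<in> PO f (U (Suc i))" unfolding PO_def
        proof (intro CollectI conjI allI)
          fix j show "E j \<in> U (Suc i)" using E by simp
          have "f ((f ^^ j) x) \<in> f ` E j" using E by blast
          moreover have "f ((f ^^ j) x) \<in> E (Suc j)" using E[of "Suc j"] by simp
          ultimately show "f ` E j \<inter> E (Suc j) \<noteq> {}" by blast
        qed
        moreover have "c = (\<lambda>j. parent (U N) (E j))"
        proof
          fix j
          have Ni: "N \<le> Suc i" "N \<le> Suc k" using ki unfolding k_def by simp_all
          have B: "parent (U N) (W j) \<in> U N" "y j \<in> parent (U N) (W j)"
            using parent_in[OF ds Ni(2) Wj(1)[of j]] y[of j] by auto
          have B': "parent (U N) (E j) \<in> U N" "(f ^^ j) x \<in> parent (U N) (E j)"
            using parent_in[OF ds Ni(1), of "E j"] E[of j] by auto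
          have "dist (y j) ((f ^^ j) x) < \<rho>" using x by (simp add: dist_commute)
          then have "parent (U N) (W j) = parent (U N) (E j)"
            using sep_same[where U=U and n=N, OF sepN B(1) B'(1) B(2) B'(2)] by simp
          then show "c j = parent (U N) (E j)" using c by simp
        qed
        ultimately show "c \<in> Img f U N i" unfolding Img_def by blast
      qed
    qed
  qed
qed

lemma part_ii:
  assumes ds: "defining_sequence U" and tame: "tame_defseq U" and cpl: "complete_defseq U"
    and cont: "continuous_on UNIV f" and fs: "finite_shadowing f"
    and mlh: "\<forall>N. \<exists>k>N. \<forall>i\<ge>k. Img f U N k = Img f U N i"
  shows "shadowing f"
proof -
  define kk where "kk = (\<lambda>m. SOME k. k > m \<and> (\<forall>i\<ge>k. Img f U m k = Img f U m i))"
  have kk: "kk m > m \<and> (\<forall>i\<ge>kk m. Img f U m (kk m) = Img f U m i)" for m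
  proof -
    have "\<exists>k. k > m \<and> (\<forall>i\<ge>k. Img f U m k = Img f U m i)" using mlh by blast
    then show ?thesis unfolding kk_def by (rule someI_ex)
  qed
  define S where "S = (\<lambda>m. Img f U m (kk m))"
  have Sprop: "c j \<in> U m \<and> (\<exists>a \<in> c j. f a \<in> c (Suc j))" if c: "c \<in> S m" for c m j
  proof -
    obtain W where W: "W \<in> PO f (U (Suc (kk m)))" and cW: "c = (\<lambda>j. parent (U m) (W j))"
      using c unfolding S_def Img_def by blast
    have Wj: "\<And>j. W j \<in> U (Suc (kk m))" "\<And>j. f ` W j \<inter> W (Suc j) \<noteq> {}" using W unfolding PO_def by auto
    have mk: "m \<le> Suc (kk m)" using kk[of m] by simp
    have P: "\<And>j. c j \<in> U m \<and> W j \<subseteq> c j" unfolding cW using parent_in[OF ds mk Wj(1)] by simp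
    obtain a where "a \<in> W j" "f a \<in> W (Suc j)" using Wj(2)[of j] by blast
    then show ?thesis using P[of j] P[of "Suc j"] by blast
  qed
  have lift: "\<exists>d. d \<in> S (Suc m) \<and> c = (\<lambda>j. parent (U m) (d j))" if c: "c \<in> S m" for c m
  proof -
    define K where "K = max (kk m) (kk (Suc m))"
    have K1: "kk m \<le> K" "kk (Suc m) \<le> K" unfolding K_def by simp_all
    have "S m = Img f U m K" unfolding S_def using kk[of m] K1 by simp
    then obtain W where W: "W \<in> PO f (U (Suc K))" and cW: "c = (\<lambda>j. parent (U m) (W j))"
      using c unfolding Img_def by blast
    have Wj: "\<And>j. W j \<in> U (Suc K)" using W unfolding PO_def by auto
    define d where "d = (\<lambda>j. parent (U (Suc m)) (W j))"
    have "S (Suc m) = Img f U (Suc m) K" unfolding S_def using kk[of "Suc m"] K1 by simp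
    then have "d \<in> S (Suc m)" unfolding Img_def d_def using W by blast
    moreover have "Suc m \<le> Suc K" using kk[of "Suc m"] K1 by simp
    then have "c = (\<lambda>j. parent (U m) (d j))"
      unfolding cW d_def using parent_trans[OF ds, of m "Suc m" "Suc K"] Wj by simp
    ultimately show ?thesis by blast
  qed
  show ?thesis unfolding shadowing_def
  proof (intro allI impI)
    fix \<epsilon> :: real assume e: "\<epsilon> > 0"
    then have "\<epsilon>/2 > 0" by simp
    then obtain N where diamN: "\<forall>n\<ge>N. \<forall>W\<in>U n. \<forall>x\<in>W. \<forall>y\<in>W. dist x y \<le> \<epsilon>/2"
      using tame_diam[OF tame] by blast
    define L where "L = Suc (kk N)"
    obtain \<rho> where rho: "\<rho> > 0" and sepL: "\<forall>W\<in>U L. \<forall>W'\<in>U L. W \<noteq> W' \<longrightarrow> (\<forall>x\<in>W. \<forall>y\<in>W'. \<rho> \<le> dist x y)"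
      using tame_sep[OF tame, of L] by blast
    obtain \<delta> where d: "\<delta> > 0" and sd: "\<forall>xs M. (\<forall>i<M. dist (f (xs i)) (xs (Suc i)) < \<delta>) \<longrightarrow>
        (\<exists>x. \<forall>i\<le>M. dist ((f ^^ i) x) (xs i) < \<rho>)" using fs rho unfolding finite_shadowing_def by blast
    show "\<exists>\<delta>>0. \<forall>xs. (\<forall>i. dist (f (xs i)) (xs (Suc i)) < \<delta>) \<longrightarrow> (\<exists>x. \<forall>i. dist ((f ^^ i) x) (xs i) < \<epsilon>)"
    proof (intro exI[of _ \<delta>] conjI allI impI d)
      fix xs assume pxs: "\<forall>i. dist (f (xs i)) (xs (Suc i)) < \<delta>"
      define W where "W = (\<lambda>j. elt U L (xs j))"
      have Wj: "W j \<in> U L \<and> xs j \<in> W j" for j unfolding W_def by (rule elt_in[OF ds])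
      have inW: "(f ^^ j) y \<in> W j" if "dist ((f ^^ j) y) (xs j) < \<rho>" for j y
      proof -
        have "elt U L ((f ^^ j) y) \<in> U L \<and> (f ^^ j) y \<in> elt U L ((f ^^ j) y)" by (rule elt_in[OF ds])
        then have "elt U L ((f ^^ j) y) = W j"
          using sep_same[where U=U and n=L, OF sepL _ conjunct1[OF Wj[of j]] _ conjunct2[OF Wj[of j]] that] by blast
        then show ?thesis using elt_in[OF ds, of L "(f ^^ j) y"] by simp
      qed
      have "W \<in> PO f (U L)" unfolding PO_def
      proof (intro CollectI conjI allI)
        fix j show "W j \<in> U L" using Wj by simp
        have "\<forall>i<Suc j. dist (f (xs i)) (xs (Suc i)) < \<delta>" using pxs by simp
        then obtain y where y: "\<forall>i\<le>Suc j. dist ((f ^^ i) y) (xs i) < \<rho>" using sd by blast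
        have "(f ^^ j) y \<in> W j" using inW y by simp
        moreover have "(f ^^ Suc j) y \<in> W (Suc j)" using inW y by blast
        ultimately show "f ` W j \<inter> W (Suc j) \<noteq> {}" by auto
      qed
      define V where "V = (\<lambda>j. parent (U N) (W j))"
      have VS: "V \<in> S N" unfolding S_def Img_def V_def using \<open>W \<in> PO f (U L)\<close> unfolding L_def by blast
      have NL: "N \<le> L" unfolding L_def using kk[of N] by simp
      have Vj: "V j = elt U N (xs j)" for j
        unfolding V_def using parent_pt[OF ds NL conjunct1[OF Wj[of j]] conjunct2[OF Wj[of j]]] elt_in[OF ds, of N "xs j"] by blast
      define C where "C = rec_nat V (\<lambda>n c. SOME d. d \<in> S (Suc (N+n)) \<and> c = (\<lambda>j. parent (U (N+n)) (d j)))"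
      have C0: "C 0 = V" unfolding C_def by simp
      have CS: "C (Suc n) = (SOME d. d \<in> S (Suc (N+n)) \<and> C n = (\<lambda>j. parent (U (N+n)) (d j)))" for n
        unfolding C_def by simp
      have Cin: "C n \<in> S (N+n)" for n
      proof (induction n)
        case 0 then show ?case using C0 VS by simp
      next
        case (Suc n)
        have "\<exists>d. d \<in> S (Suc (N+n)) \<and> C n = (\<lambda>j. parent (U (N+n)) (d j))" using lift[OF Suc.IH] .
        then have "C (Suc n) \<in> S (Suc (N+n)) \<and> C n = (\<lambda>j. parent (U (N+n)) (C (Suc n) j))"
          unfolding CS by (rule someI_ex)
        then show ?case by simp
      qed
      have Cstep: "C n = (\<lambda>j. parent (U (N+n)) (C (Suc n) j))" for n
      proof -
        have "\<exists>d. d \<in> S (Suc (N+n)) \<and> C n = (\<lambda>j. parent (U (N+n)) (d j))" using lift[OF Cin[of n]] .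
        then have "C (Suc n) \<in> S (Suc (N+n)) \<and> C n = (\<lambda>j. parent (U (N+n)) (C (Suc n) j))"
          unfolding CS by (rule someI_ex)
        then show ?thesis by simp
      qed
      have CU: "C n j \<in> U (N+n)" for n j using Sprop[OF Cin[of n]] by simp
      define E where "E = (\<lambda>j n. parent (U n) (C (n - N) j))"
      have En: "E j n \<in> U n" for j n
      proof -
        have "n \<le> N + (n - N)" by simp
        then show ?thesis unfolding E_def using parent_in[OF ds _ CU] by blast
      qed
      have Ege: "E j n = C (n - N) j" if "N \<le> n" for j n
      proof -
        have "C (n - N) j \<in> U n" using CU[of "n - N" j] that by simp
        then show ?thesis unfolding E_def using parent_eq[OF ds _ _ order_refl] by blast
      qed
      have Enest: "E j (Suc n) \<subseteq> E j n" for j n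
      proof (cases "N \<le> n")
        case True
        have "Suc n - N = Suc (n - N)" using True by simp
        then have "E j (Suc n) = C (Suc (n - N)) j" using Ege[of "Suc n" j] True by simp
        moreover have "E j n = parent (U n) (C (Suc (n - N)) j)"
          using Ege[OF True, of j] Cstep[of "n - N"] True by simp
        moreover have "n \<le> N + Suc (n - N)" by simp
        ultimately show ?thesis using parent_in[OF ds _ CU] by metis
      next
        case False
        then have a: "Suc n - N = 0" "n - N = 0" "Suc n \<le> N" by simp_all
        have "E j n = parent (U n) (parent (U (Suc n)) (C 0 j))"
          unfolding E_def a using parent_trans[OF ds, of n "Suc n" N "C 0 j"] a(3) CU[of 0 j] by simp
        moreover have "E j (Suc n) = parent (U (Suc n)) (C 0 j)" unfolding E_def a by simp
        moreover have "parent (U (Suc n)) (C 0 j) \<in> U (Suc n)" using parent_in[OF ds a(3)] CU[of 0 j] by simp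
        ultimately show ?thesis using parent_in[OF ds, of n "Suc n"] by simp
      qed
      have "\<exists>z. \<forall>n. z \<in> E j n" for j
      proof -
        have "(\<forall>n. E j n \<in> U n) \<and> (\<forall>n. E j (Suc n) \<subseteq> E j n)" using En Enest by blast
        then have "(\<Inter>n. E j n) \<noteq> {}" using cpl unfolding complete_defseq_def by blast
        then show ?thesis by blast
      qed
      then obtain z where z: "\<And>j n. z j \<in> E j n" by metis
      have zC: "z j \<in> C n j" for j n using z[of j "N + n"] Ege[of "N + n" j] by simp
      have fz: "f (z j) = z (Suc j)" for j
      proof (rule ccontr)
        assume ne: "f (z j) \<noteq> z (Suc j)"
        define \<eta> where "\<eta> = dist (f (z j)) (z (Suc j))"
        have eta: "\<eta> > 0" unfolding \<eta>_def using ne by simp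
        have "isCont f (z j)" using cont continuous_on_eq_continuous_at[of UNIV f] by simp
        then obtain \<gamma> where g: "\<gamma> > 0" and gc: "\<forall>x'. dist x' (z j) < \<gamma> \<longrightarrow> dist (f x') (f (z j)) < \<eta>/2"
          using eta unfolding continuous_at_eps_delta by (metis half_gt_zero)
        have "min (\<gamma>/2) (\<eta>/2) > 0" using g eta by simp
        then obtain M where dM: "\<forall>n\<ge>M. \<forall>W\<in>U n. \<forall>x\<in>W. \<forall>y\<in>W. dist x y \<le> min (\<gamma>/2) (\<eta>/2)"
          using tame_diam[OF tame] by blast
        obtain a where a: "a \<in> C M j" "f a \<in> C M (Suc j)" using Sprop[OF Cin[of M], of j] by blast
        have MN: "M \<le> N + M" by simp
        have d1: "dist a (z j) \<le> min (\<gamma>/2) (\<eta>/2)"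
          using diam_use[OF dM MN CU[of M j] a(1) zC[of j M]] .
        have d2: "dist (f a) (z (Suc j)) \<le> min (\<gamma>/2) (\<eta>/2)"
          using diam_use[OF dM MN CU[of M "Suc j"] a(2) zC[of "Suc j" M]] .
        have "dist a (z j) < \<gamma>" using d1 g by simp
        then have d3: "dist (f a) (f (z j)) < \<eta>/2" using gc by blast
        have "\<eta> \<le> dist (f (z j)) (f a) + dist (f a) (z (Suc j))" unfolding \<eta>_def by (rule dist_triangle)
        also have "\<dots> < \<eta>" using d2 d3 by (simp add: dist_commute)
        finally show False by simp
      qed
      have orb: "z j = (f ^^ j) (z 0)" for j
      proof (induction j)
        case 0 then show ?case by simp
      next
        case (Suc j) then show ?case using fz[of j] by simp
      qed
      show "\<exists>x. \<forall>i. dist ((f ^^ i) x) (xs i) < \<epsilon>"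
      proof (intro exI[of _ "z 0"] allI)
        fix i
        have "z i \<in> elt U N (xs i)" using zC[of i 0] C0 Vj[of i] by simp
        moreover have "elt U N (xs i) \<in> U N \<and> xs i \<in> elt U N (xs i)" by (rule elt_in[OF ds])
        ultimately have "dist (z i) (xs i) \<le> \<epsilon>/2" using diam_use[OF diamN order_refl] by blast
        then show "dist ((f ^^ i) (z 0)) (xs i) < \<epsilon>" using orb[of i] e by simp
      qed
    qed
  qed
qed

theorem theorem4p16:
  fixes f :: "'a::metric_space \<Rightarrow> 'a" and \<U> :: "nat \<Rightarrow> 'a set set"
  assumes sep: "separable_space TYPE('a)"
    and cont: "continuous_on UNIV f"
    and defseq: "defining_sequence \<U>"
    and tame: "tame_defseq \<U>"
  shows "(shadowing f \<longrightarrow>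
            finite_shadowing f \<and> mittag_leffler (hook \<U>) (\<lambda>n. PO f (\<U> n)))
       \<and> (complete_defseq \<U> \<and> uniformly_continuous_on UNIV f \<longrightarrow>
            finite_shadowing f \<and> mittag_leffler (hook \<U>) (\<lambda>n. PO f (\<U> n)) \<longrightarrow>
            shadowing f)"
proof (intro conjI impI)
  assume sh: "shadowing f"
  show "finite_shadowing f" using part_fin[OF sh] .
  show "mittag_leffler (hook \<U>) (\<lambda>n. PO f (\<U> n))"
    using ml_iff[OF defseq, of f] part_ml[OF defseq tame sh] by simp
next
  assume a: "complete_defseq \<U> \<and> uniformly_continuous_on UNIV f"
    and b: "finite_shadowing f \<and> mittag_leffler (hook \<U>) (\<lambda>n. PO f (\<U> n))"
  have "\<forall>N. \<exists>k>N. \<forall>i\<ge>k. Img f \<U> N k = Img f \<U> N i" using ml_iff[OF defseq, of f] b by simp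
  then show "shadowing f" using part_ii[OF defseq tame _ cont] a b by blast
qed

end
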